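(* Let $d>0$ and let $I\subseteq\mathbb{R}$ be a nonempty, non-singleton interval with $\ell(I)\geq d$. (1) Let $g: I\to\mathbb{R}$ be increasing and $k: I\to\mathbb{R}$ bounded, such that $\mathscr{H}_{x_d}(g)\geq\mathscr{H}(k)$ for every $x\in I$. Then both $g+k$ and $g-k$ are $d$-periodically increasing. (2) Conversely, suppose $\ell(I)>2d$ and let $f: I\to\mathbb{R}$ be $d$-periodically increasing such that there is $l>0$ with $f(x+nd)-f(x+(n-1)d)=l$ for all $x\in I$ and $n\in\mathbb{N}$ with $x+(n-1)d,\ x+nd\in I$. Then $f=g+h$ where $g: I\to\mathbb{R}$ is increasing and $h: I\to\mathbb{R}$ is periodic with period $d$, i.e. $h(x+d)=h(x)$ whenever $x,x+d\in I$.
   Context: $\ell(I)$ denotes the length of $I$. A function $f: I\to\mathbb{R}$ is $d$-periodically increasing if $f(x)\leq f(y)$ for all $x,y\in I$ with $y-x\geq d$. For $x\in I$ and $I_d=[x,x+d]\cap I$, the extended height is $\mathscr{H}_{x_d}(f)=\sup_{u,v\in I_d}|f(u)-f(v)|$, and the height is $\mathscr{H}(f)=\sup_{u,v\in I}|f(u)-f(v)|$. *)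

theory Defs
  imports "HOL-Analysis.Analysis"
begin

definition interval_length :: "real set \<Rightarrow> ereal" where
  "interval_length I = Sup (ereal ` I) - Inf (ereal ` I)"

definition d_periodically_increasing :: "real \<Rightarrow> real set \<Rightarrow> (real \<Rightarrow> real) \<Rightarrow> bool" where
  "d_periodically_increasing d I f \<longleftrightarrow>
     (\<forall>x\<in>I. \<forall>y\<in>I. y - x \<ge> d \<longrightarrow> f x \<le> f y)"

definition height_on :: "real set \<Rightarrow> (real \<Rightarrow> real) \<Rightarrow> ereal" where
  "height_on A f = (SUP u\<in>A. SUP v\<in>A. ereal \<bar>f u - f v\<bar>)"

definition ext_height :: "real \<Rightarrow> real set \<Rightarrow> real \<Rightarrow> (real \<Rightarrow> real) \<Rightarrow> ereal" where
  "ext_height d I x f = height_on ({x..x+d} \<inter> I) f"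

end

theory Submission
  imports Defs
begin

theorem theorem3p1:
  fixes d :: real and I :: "real set"
  assumes d_pos: "d > 0"
    and I_interval: "is_interval I"
    and I_nonsingleton: "\<exists>a\<in>I. \<exists>b\<in>I. a \<noteq> b"
    and I_len: "interval_length I \<ge> ereal d"
  shows
    "(\<forall>g k :: real \<Rightarrow> real.
        mono_on I g \<and> (\<exists>B. \<forall>x\<in>I. \<bar>k x\<bar> \<le> B) \<and>
        (\<forall>x\<in>I. ext_height d I x g \<ge> height_on I k)
        \<longrightarrow> d_periodically_increasing d I (\<lambda>x. g x + k x) \<and>
            d_periodically_increasing d I (\<lambda>x. g x - k x))
     \<and>
     (interval_length I > ereal (2 * d) \<longrightarrow>
       (\<forall>f :: real \<Rightarrow> real.
          d_periodically_increasing d I f \<and>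
          (\<exists>l > 0. \<forall>x\<in>I. \<forall>n::nat. n \<ge> 1 \<longrightarrow>
              x + (real n - 1) * d \<in> I \<longrightarrow> x + real n * d \<in> I \<longrightarrow>
              f (x + real n * d) - f (x + (real n - 1) * d) = l)
          \<longrightarrow> (\<exists>g h :: real \<Rightarrow> real.
                 mono_on I g \<and>
                 (\<forall>x. x \<in> I \<longrightarrow> x + d \<in> I \<longrightarrow> h (x + d) = h x) \<and>
                 (\<forall>x\<in>I. f x = g x + h x))))"
proof (intro conjI allI impI)
  fix g k :: "real \<Rightarrow> real"
  assume A: "mono_on I g \<and> (\<exists>B. \<forall>x\<in>I. \<bar>k x\<bar> \<le> B) \<and>
        (\<forall>x\<in>I. ext_height d I x g \<ge> height_on I k)"
  have key: "\<bar>k x - k y\<bar> \<le> g y - g x" if xy: "x \<in> I" "y \<in> I" "y - x \<ge> d" for x y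
  proof -
    have m: "mono_on I g" using A by blast
    have "ext_height d I x g \<le> ereal (g y - g x)"
      unfolding ext_height_def height_on_def
    proof (intro SUP_least)
      fix u v assume u: "u \<in> {x..x+d} \<inter> I" and v: "v \<in> {x..x+d} \<inter> I"
      have "g x \<le> g u" "g u \<le> g y" "g x \<le> g v" "g v \<le> g y"
        using u v xy by (simp_all add: mono_onD[OF m])
      then show "ereal \<bar>g u - g v\<bar> \<le> ereal (g y - g x)" by simp
    qed
    moreover have "ereal \<bar>k x - k y\<bar> \<le> height_on I k"
      unfolding height_on_def
      by (rule SUP_upper2[OF xy(1)], rule SUP_upper[OF xy(2)])
    moreover have "ext_height d I x g \<ge> height_on I k" using A xy by blast
    ultimately have "ereal \<bar>k x - k y\<bar> \<le> ereal (g y - g x)" by (meson order_trans)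
    then show ?thesis by simp
  qed
  show "d_periodically_increasing d I (\<lambda>x. g x + k x)"
    unfolding d_periodically_increasing_def
  proof (intro ballI impI)
    fix x y assume "x \<in> I" "y \<in> I" "d \<le> y - x"
    from key[OF this] show "g x + k x \<le> g y + k y" by linarith
  qed
  show "d_periodically_increasing d I (\<lambda>x. g x - k x)"
    unfolding d_periodically_increasing_def
  proof (intro ballI impI)
    fix x y assume "x \<in> I" "y \<in> I" "d \<le> y - x"
    from key[OF this] show "g x - k x \<le> g y - k y" by linarith
  qed
next
  fix f :: "real \<Rightarrow> real"
  assume A: "d_periodically_increasing d I f \<and>
          (\<exists>l > 0. \<forall>x\<in>I. \<forall>n::nat. n \<ge> 1 \<longrightarrow>
              x + (real n - 1) * d \<in> I \<longrightarrow> x + real n * d \<in> I \<longrightarrow>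
              f (x + real n * d) - f (x + (real n - 1) * d) = l)"
  then obtain l where l: "l > 0" and L: "\<forall>x\<in>I. \<forall>n::nat. n \<ge> 1 \<longrightarrow>
              x + (real n - 1) * d \<in> I \<longrightarrow> x + real n * d \<in> I \<longrightarrow>
              f (x + real n * d) - f (x + (real n - 1) * d) = l" by blast
  have L1: "f (x + d) - f x = l" if "x \<in> I" "x + d \<in> I" for x
    using L[rule_format, OF that(1), of 1] that by simp
  show "\<exists>g h :: real \<Rightarrow> real.
                 mono_on I g \<and>
                 (\<forall>x. x \<in> I \<longrightarrow> x + d \<in> I \<longrightarrow> h (x + d) = h x) \<and>
                 (\<forall>x\<in>I. f x = g x + h x)"
  proof (intro exI conjI)
    show "mono_on I (\<lambda>x. l * x / d)"
    proof (rule mono_onI)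
      fix r s :: real assume "r \<le> s"
      then have "l * r \<le> l * s" using l by simp
      then show "l * r / d \<le> l * s / d" using d_pos by (simp add: divide_right_mono)
    qed
    show "\<forall>x. x \<in> I \<longrightarrow> x + d \<in> I \<longrightarrow> (\<lambda>x. f x - l * x / d) (x + d) = (\<lambda>x. f x - l * x / d) x"
    proof (intro allI impI)
      fix x assume "x \<in> I" "x + d \<in> I"
      from L1[OF this] have "f (x + d) = f x + l" by simp
      moreover have "l * (x + d) / d = l * x / d + l" using d_pos by (simp add: field_simps)
      ultimately show "f (x + d) - l * (x + d) / d = f x - l * x / d" by simp
    qed
    show "\<forall>x\<in>I. f x = l * x / d + (f x - l * x / d)" by simp
  qed
qed

end
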